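(* Let $\mathcal W$ be a monotonic game on $[n]$, $i\neq j$ players, and $\hat{\mathcal W}$ the game obtained by imposing a symmetric weak quarrel between $i$ and $j$. Then the Penrose–Banzhaf measure satisfies $\hat\psi^{PB}_i\le\psi^{PB}_i$ and $\hat\psi^{PB}_j\le\psi^{PB}_j$, where $\psi^{PB}$ and $\hat\psi^{PB}$ denote the measure computed in $\mathcal W$ and $\hat{\mathcal W}$ respectively.
   Context: Players are $[n]=\{1,\dots,n\}$. A binary voting game on $[n]$ is identified with its collection $\mathcal W\subseteq 2^{[n]}$ of winning sets ($S\in\mathcal W$ means the division in which exactly the members of $S$ vote YES has outcome YES). It is monotonic if $T\subseteq S$ and $T\in\mathcal W$ imply $S\in\mathcal W$. Player $i$ is YES-decisive for $S$ in a game $\mathcal W$ if $i\in S$, $S\in\mathcal W$ and $S\setminus\{i\}\notin\mathcal W$. Symmetric weak quarrel between $i$ and $j$: for every $S\subseteq[n]\setminus\{i,j\}$, $S\cup\{i,j\}\in\hat{\mathcal W}\iff (S\cup\{i\}\in\mathcal W\text{ or }S\cup\{j\}\in\mathcal W)$; $S\in\hat{\mathcal W}\iff (S\cup\{i\}\in\mathcal W\text{ and }S\cup\{j\}\in\mathcal W)$; $S\cup\{i\}\in\hat{\mathcal W}\iff S\cup\{i\}\in\mathcal W$; $S\cup\{j\}\in\hat{\mathcal W}\iff S\cup\{j\}\in\mathcal W$. Penrose–Banzhaf measure: $\psi^{PB}_i=\frac{1}{2^{n-1}}\#\{S\subseteq[n]: i\in S,\ i\text{ is YES-decisive for }S\}$.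 *)

theory Defs
  imports Complex_Main
begin

text \<open>Players are {1..n}; a game is its collection of winning sets, a family of subsets of {1..n}.\<close>

definition game :: "nat \<Rightarrow> nat set set \<Rightarrow> bool" where
  "game n W \<longleftrightarrow> W \<subseteq> Pow {1..n}"

definition monotonic :: "nat \<Rightarrow> nat set set \<Rightarrow> bool" where
  "monotonic n W \<longleftrightarrow> (\<forall>S T. S \<subseteq> {1..n} \<longrightarrow> T \<subseteq> S \<longrightarrow> T \<in> W \<longrightarrow> S \<in> W)"

definition yes_decisive :: "nat set set \<Rightarrow> nat \<Rightarrow> nat set \<Rightarrow> bool" where
  "yes_decisive W i S \<longleftrightarrow> i \<in> S \<and> S \<in> W \<and> S - {i} \<notin> W"

definition sym_weak_quarrel :: "nat \<Rightarrow> nat set set \<Rightarrow> nat \<Rightarrow> nat \<Rightarrow> nat set set \<Rightarrow> bool" where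
  "sym_weak_quarrel n W i j W' \<longleftrightarrow>
     (\<forall>S. S \<subseteq> {1..n} - {i, j} \<longrightarrow>
        (S \<union> {i, j} \<in> W' \<longleftrightarrow> (S \<union> {i} \<in> W \<or> S \<union> {j} \<in> W)) \<and>
        (S \<in> W' \<longleftrightarrow> (S \<union> {i} \<in> W \<and> S \<union> {j} \<in> W)) \<and>
        (S \<union> {i} \<in> W' \<longleftrightarrow> S \<union> {i} \<in> W) \<and>
        (S \<union> {j} \<in> W' \<longleftrightarrow> S \<union> {j} \<in> W))"

definition penrose_banzhaf :: "nat \<Rightarrow> nat set set \<Rightarrow> nat \<Rightarrow> real" where
  "penrose_banzhaf n W i =
     real (card {S. S \<subseteq> {1..n} \<and> i \<in> S \<and> yes_decisive W i S}) / 2 ^ (n - 1)"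

end

theory Submission
  imports Defs
begin

lemma swq_sym: "sym_weak_quarrel n W i j W' \<Longrightarrow> sym_weak_quarrel n W j i W'"
proof -
  have e: "{j, i} = {i, j}" by auto
  assume "sym_weak_quarrel n W i j W'"
  thus ?thesis unfolding sym_weak_quarrel_def e by blast
qed

lemma dec_subset:
  assumes mono: "monotonic n W" and "i \<noteq> j" and jn: "j \<in> {1..n}" and q: "sym_weak_quarrel n W i j W'"
    and S: "S \<subseteq> {1..n}" and d: "yes_decisive W' i S"
  shows "yes_decisive W i S"
proof -
  define T where "T = S - {i, j}"
  have T: "T \<subseteq> {1..n} - {i, j}" using S T_def by auto
  have qT: "(T \<union> {i, j} \<in> W' \<longleftrightarrow> (T \<union> {i} \<in> W \<or> T \<union> {j} \<in> W))"
     "(T \<in> W' \<longleftrightarrow> (T \<union> {i} \<in> W \<and> T \<union> {j} \<in> W))"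
     "(T \<union> {i} \<in> W' \<longleftrightarrow> T \<union> {i} \<in> W)"
     "(T \<union> {j} \<in> W' \<longleftrightarrow> T \<union> {j} \<in> W)"
    using q T unfolding sym_weak_quarrel_def by blast+
  have iS: "i \<in> S" and dW: "S \<in> W'" "S - {i} \<notin> W'" using d unfolding yes_decisive_def by auto
  show ?thesis
  proof (cases "j \<in> S")
    case True
    have e1: "S = T \<union> {i, j}" using True iS T_def by auto
    have e2: "S - {i} = T \<union> {j}" using True iS T_def \<open>i \<noteq> j\<close> by auto
    have a1: "T \<union> {i} \<in> W \<or> T \<union> {j} \<in> W" using dW(1) qT(1) e1 by simp
    have a2: "T \<union> {j} \<notin> W" using dW(2) qT(4) e2 by simp
    have "T \<union> {i} \<in> W" using a1 a2 by blast
    moreover have "T \<union> {i} \<subseteq> S" using e1 by blast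
    ultimately have "S \<in> W" using mono S unfolding monotonic_def by blast
    thus ?thesis using a2 e2 iS unfolding yes_decisive_def by simp
  next
    case False
    have e1: "S = T \<union> {i}" using False iS T_def by auto
    have e2: "S - {i} = T" using False iS T_def \<open>i \<noteq> j\<close> by auto
    have a1: "T \<union> {i} \<in> W" using dW(1) qT(3) e1 by simp
    have a2: "\<not> (T \<union> {i} \<in> W \<and> T \<union> {j} \<in> W)" using dW(2) qT(2) e2 by simp
    have b: "T \<union> {j} \<notin> W" using a1 a2 by blast
    have "T \<union> {j} \<subseteq> {1..n}" using T jn by auto
    hence "T \<notin> W" using b mono unfolding monotonic_def by blast
    thus ?thesis using a1 e1 e2 iS unfolding yes_decisive_def by simp
  qed
qed

theorem theorem15:
  fixes n :: nat and W W' :: "nat set set" and i j :: nat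
  assumes "game n W" and "monotonic n W"
    and "i \<in> {1..n}" and "j \<in> {1..n}" and "i \<noteq> j"
    and "game n W'" and "sym_weak_quarrel n W i j W'"
  shows "penrose_banzhaf n W' i \<le> penrose_banzhaf n W i
       \<and> penrose_banzhaf n W' j \<le> penrose_banzhaf n W j"
proof -
  have gen: "penrose_banzhaf n W' a \<le> penrose_banzhaf n W a"
    if "a \<noteq> b" "b \<in> {1..n}" "sym_weak_quarrel n W a b W'" for a b
  proof -
    have sub: "{S. S \<subseteq> {1..n} \<and> a \<in> S \<and> yes_decisive W' a S}
      \<subseteq> {S. S \<subseteq> {1..n} \<and> a \<in> S \<and> yes_decisive W a S}"
      using dec_subset[OF assms(2) that(1) that(2) that(3)] by blast
    have fin: "finite {S. S \<subseteq> {1..n} \<and> a \<in> S \<and> yes_decisive W a S}"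
      by (rule finite_subset[of _ "Pow {1..n}"]) auto
    show ?thesis unfolding penrose_banzhaf_def
      by (intro divide_right_mono) (use card_mono[OF fin sub] in auto)
  qed
  show ?thesis using gen[of i j] gen[of j i] assms swq_sym by auto
qed

end
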